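(* Let $K$ be a field of characteristic zero. Suppose $F,G,H,E,\tilde E\in K[X]\setminus K$ and degree-one polynomials $a,b,c,\tilde a,\tilde b,\tilde c\in K[X]$ satisfy $F=E\circ H\circ a$, $G=E\circ c\circ H\circ b$, $F^t=\tilde E\circ H\circ\tilde a$, and $G^t=\tilde E\circ\tilde c\circ H\circ\tilde b$ for some integer $t>1$. Then there is a degree-one $e\in K[X]$ such that $F^{t-1}=G^{t-1}\circ e$.
   Context: $F^t$ denotes the $t$-th iterate of $F$ under composition $\circ$. *)

theory Defs
  imports "HOL-Computational_Algebra.Polynomial"
begin

primrec poly_iter :: "'a::comm_semiring_1 poly \<Rightarrow> nat \<Rightarrow> 'a poly" where
  "poly_iter F 0 = [:0, 1:]"
| "poly_iter F (Suc n) = pcompose F (poly_iter F n)"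

end

theory Submission
  imports Defs
begin

lemma deg_eq_from_coeff:
  fixes p :: "'a::zero poly"
  assumes "degree p \<le> n" "coeff p n \<noteq> 0" shows "degree p = n"
  using assms le_degree[of p n] by linarith

lemma diff_comp:
  fixes A D R :: "'a::field_char_0 poly"
  assumes R: "degree R < degree D" "R \<noteq> 0"
  shows "degree A > 0 \<Longrightarrow> degree (pcompose A (D+R) - pcompose A D) = (degree A - 1)*degree D + degree R \<and> lead_coeff (pcompose A (D+R) - pcompose A D) = of_nat (degree A) * lead_coeff A * lead_coeff D ^ (degree A - 1) * lead_coeff R"
proof (induction A rule: pCons_induct)
  case 0
  then show ?case by simp
next
  case (pCons a A0)
  have A0: "A0 \<noteq> 0" using pCons by auto
  have dA: "degree (pCons a A0) = Suc (degree A0)" using A0 by simp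
  have lA: "lead_coeff (pCons a A0) = lead_coeff A0" using A0 by simp
  have Dpos: "degree D > 0" using R by simp
  have D0: "D \<noteq> 0" using Dpos by auto
  have dDR: "degree (D+R) = degree D" using R degree_add_eq_left by blast
  have lDR: "lead_coeff (D+R) = lead_coeff D" using R by (metis add.commute lead_coeff_add_le)
  have eq: "pcompose (pCons a A0) (D+R) - pcompose (pCons a A0) D
     = D * (pcompose A0 (D+R) - pcompose A0 D) + R * pcompose A0 (D+R)"
    by (simp add: pcompose_pCons algebra_simps)
  show ?case
  proof (cases "degree A0 = 0")
    case True
    then obtain c where c: "A0 = [:c:]" by (metis degree_eq_zeroE)
    with A0 have "c \<noteq> 0" by auto
    have "pcompose (pCons a A0) (D+R) - pcompose (pCons a A0) D = smult c R"
      unfolding eq c by (simp add: algebra_simps pcompose_pCons smult_add_right)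
    then show ?thesis using \<open>c \<noteq> 0\<close> dA lA c True by simp
  next
    case False
    let ?N = "(degree A0 - 1)*degree D + degree R"
    let ?M = "degree A0 * degree D + degree R"
    from pCons.IH[OF] False have IH:
      "degree (pcompose A0 (D+R) - pcompose A0 D) = ?N"
      "lead_coeff (pcompose A0 (D+R) - pcompose A0 D) = of_nat (degree A0) * lead_coeff A0 * lead_coeff D ^ (degree A0 - 1) * lead_coeff R"
      by auto
    define \<Delta> where "\<Delta> = pcompose A0 (D+R) - pcompose A0 D"
    have lc0: "lead_coeff A0 \<noteq> 0" "lead_coeff D \<noteq> 0" "lead_coeff R \<noteq> 0" using A0 D0 R by auto
    have \<Delta>0: "\<Delta> \<noteq> 0"
    proof
      assume "\<Delta> = 0"
      then have "lead_coeff \<Delta> = 0" by simp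
      with IH(2) lc0 False show False by (simp add: \<Delta>_def)
    qed
    have ar: "degree D + ?N = ?M" using False by (cases "degree A0") auto
    have d1: "degree (D * \<Delta>) = ?M" using degree_mult_eq[OF D0 \<Delta>0] IH(1) ar
      unfolding \<Delta>_def[symmetric] by simp
    have c1: "coeff (D * \<Delta>) ?M = lead_coeff D * (of_nat (degree A0) * lead_coeff A0 * lead_coeff D ^ (degree A0 - 1) * lead_coeff R)"
      using d1 lead_coeff_mult[of D \<Delta>] IH(2) unfolding \<Delta>_def[symmetric] by simp
    have d2: "degree (R * pcompose A0 (D+R)) = ?M"
      using degree_mult_eq[of R "pcompose A0 (D+R)"] R(2) degree_pcompose[of A0 "D+R"] dDR A0 Dpos
      by (auto simp: pcompose_eq_0_iff)
    have c2: "coeff (R * pcompose A0 (D+R)) ?M = lead_coeff R * (lead_coeff A0 * lead_coeff D ^ degree A0)"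
      using d2 lead_coeff_mult[of R "pcompose A0 (D+R)"] lead_coeff_comp[of "D+R" A0] dDR Dpos lDR by simp
    have sumc: "coeff (D * \<Delta> + R * pcompose A0 (D+R)) ?M = of_nat (Suc (degree A0)) * lead_coeff A0 * lead_coeff D ^ degree A0 * lead_coeff R"
    proof -
      have pw: "lead_coeff D * lead_coeff D ^ (degree A0 - 1) = lead_coeff D ^ degree A0"
        using False by (cases "degree A0") auto
      have "coeff (D * \<Delta> + R * pcompose A0 (D+R)) ?M = of_nat (degree A0) * lead_coeff A0 * (lead_coeff D * lead_coeff D ^ (degree A0 - 1)) * lead_coeff R + lead_coeff A0 * lead_coeff D ^ degree A0 * lead_coeff R"
        using c1 c2 by (simp add: algebra_simps)
      also have "\<dots> = of_nat (Suc (degree A0)) * lead_coeff A0 * lead_coeff D ^ degree A0 * lead_coeff R"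
        unfolding pw by (simp add: algebra_simps)
      finally show ?thesis .
    qed
    have nz: "of_nat (Suc (degree A0)) * lead_coeff A0 * lead_coeff D ^ degree A0 * lead_coeff R \<noteq> 0"
      using lc0 by (simp del: of_nat_Suc)
    have dle: "degree (D * \<Delta> + R * pcompose A0 (D+R)) \<le> ?M"
      using degree_add_le[of "D * \<Delta>" ?M] d1 d2 by simp
    have dd: "degree (D * \<Delta> + R * pcompose A0 (D+R)) = ?M"
      using deg_eq_from_coeff[OF dle] sumc nz by simp
    show ?thesis unfolding eq \<Delta>_def[symmetric] dA lA using dd sumc False
      by simp
  qed
qed

lemma right_factor:
  fixes A B C D :: "'a::field_char_0 poly"
  assumes eq: "pcompose A B = pcompose C D" and dBD: "degree B = degree D"
    and Dpos: "degree D > 0" and Apos: "degree A > 0"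
  shows "\<exists>l. degree l = 1 \<and> pcompose A l = C"
proof -
  define k where "k = degree D"
  have B0: "B \<noteq> 0" "D \<noteq> 0" using dBD Dpos by auto
  define \<alpha> where "\<alpha> = lead_coeff B / lead_coeff D"
  define \<beta> where "\<beta> = coeff B 0 - \<alpha> * coeff D 0"
  define l where "l = [:\<beta>, \<alpha>:]"
  have \<alpha>0: "\<alpha> \<noteq> 0" using B0 by (simp add: \<alpha>_def)
  have dl: "degree l = 1" using \<alpha>0 by (simp add: l_def)
  define D' where "D' = pcompose l D"
  have D'eq: "D' = [:\<beta>:] + smult \<alpha> D" by (simp add: D'_def l_def pcompose_pCons)
  have dD': "degree D' = k" using degree_pcompose[of l D] dl by (simp add: D'_def k_def)
  define R where "R = B - D'"
  have BR: "B = D' + R" by (simp add: R_def)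
  have R0: "R = 0"
  proof (rule ccontr)
    assume Rn: "R \<noteq> 0"
    have "coeff R k = 0"
    proof -
      have l0: "lead_coeff D \<noteq> 0" using B0 by simp
      have "coeff R k = coeff B k - \<alpha> * coeff D k" using Dpos
        by (cases k) (simp_all add: R_def D'eq k_def)
      also have "\<dots> = lead_coeff B - \<alpha> * lead_coeff D" using dBD by (simp add: k_def)
      also have "\<dots> = 0" using l0 by (simp add: \<alpha>_def)
      finally show ?thesis .
    qed
    moreover have "degree R \<le> k" unfolding R_def using dD' dBD k_def
      using degree_diff_le[of B k D'] by simp
    ultimately have Rlt: "degree R < k" using Rn
      by (metis le_neq_implies_less leading_coeff_0_iff)
    have "coeff R 0 = 0" by (simp add: R_def D'eq \<beta>_def)
    hence Rpos: "degree R > 0" using Rn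
      by (metis gr0I leading_coeff_0_iff)
    have key: "degree (pcompose A (D'+R) - pcompose A D') = (degree A - 1)*k + degree R"
      using diff_comp[of R D' A] Rlt dD' Rn Apos by simp
    have "pcompose A (D'+R) - pcompose A D' = pcompose (C - pcompose A l) D"
      using eq BR by (simp add: D'_def pcompose_diff pcompose_assoc)
    hence "degree (pcompose A (D'+R) - pcompose A D') = degree (C - pcompose A l) * k"
      by (simp add: degree_pcompose k_def)
    with key have "(degree A - 1)*k + degree R = degree (C - pcompose A l) * k" by simp
    hence "k dvd (degree A - 1)*k + degree R" by simp
    hence "k dvd degree R" using dvd_add_right_iff[of k "(degree A - 1)*k" "degree R"] by simp
    with Rlt Rpos show False using nat_dvd_not_less by blast
  qed
  have "pcompose (pcompose A l - C) D = 0"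
    using eq R0 by (simp add: BR D'_def pcompose_diff pcompose_assoc)
  hence "pcompose A l - C = 0" using pcompose_eq_0 Dpos by blast
  thus ?thesis using dl by auto
qed

lemma iter_Suc':
  fixes F :: "'a::comm_semiring_1 poly"
  shows "poly_iter F (Suc n) = pcompose (poly_iter F n) F"
proof (induction n)
  case 0
  then show ?case by (simp add: pcompose_pCons)
next
  case (Suc n)
  have "poly_iter F (Suc (Suc n)) = pcompose F (pcompose (poly_iter F n) F)"
    using Suc by simp
  also have "\<dots> = pcompose (poly_iter F (Suc n)) F" by (simp add: pcompose_assoc)
  finally show ?case .
qed

lemma deg_iter:
  fixes F :: "'a::field poly"
  shows "degree (poly_iter F n) = degree F ^ n"
  by (induction n) (simp_all add: degree_pcompose)

theorem lemma3p1:
  fixes F G H E E' a b c a' b' c' :: "'a::field_char_0 poly"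
    and t :: nat
  assumes "degree F > 0" "degree G > 0" "degree H > 0" "degree E > 0" "degree E' > 0"
    and "degree a = 1" "degree b = 1" "degree c = 1"
    and "degree a' = 1" "degree b' = 1" "degree c' = 1"
    and "t > 1"
    and "F = pcompose E (pcompose H a)"
    and "G = pcompose E (pcompose c (pcompose H b))"
    and "poly_iter F t = pcompose E' (pcompose H a')"
    and "poly_iter G t = pcompose E' (pcompose c' (pcompose H b'))"
  shows "\<exists>e :: 'a poly. degree e = 1 \<and> poly_iter F (t - 1) = pcompose (poly_iter G (t - 1)) e"
proof -
  define s where "s = t - 1"
  have ts: "t = Suc s" using assms(12) by (simp add: s_def)
  have dFs: "degree (poly_iter F s) > 0" using assms(1) by (simp add: deg_iter)
  have dGs: "degree (poly_iter G s) > 0" using assms(2) by (simp add: deg_iter)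
  have e1: "pcompose (pcompose (poly_iter F s) E) (pcompose H a) = pcompose E' (pcompose H a')"
  proof -
    have "poly_iter F t = pcompose (poly_iter F s) F" unfolding ts by (rule iter_Suc')
    thus ?thesis using assms(15) assms(13) by (simp add: pcompose_assoc)
  qed
  obtain l1 where l1: "degree l1 = 1" "pcompose (pcompose (poly_iter F s) E) l1 = E'"
    using right_factor[OF e1] assms dFs by (auto simp: degree_pcompose)
  have e2: "pcompose (pcompose (pcompose (poly_iter G s) E) c) (pcompose H b) = pcompose (pcompose E' c') (pcompose H b')"
  proof -
    have "poly_iter G t = pcompose (poly_iter G s) G" unfolding ts by (rule iter_Suc')
    thus ?thesis using assms(16) assms(14) by (simp add: pcompose_assoc)
  qed
  obtain l2 where l2: "degree l2 = 1" "pcompose (pcompose (pcompose (poly_iter G s) E) c) l2 = pcompose E' c'"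
    using right_factor[OF e2] assms dGs by (auto simp: degree_pcompose)
  have e3: "pcompose (poly_iter G s) (pcompose E (pcompose c l2)) = pcompose (poly_iter F s) (pcompose E (pcompose l1 c'))"
  proof -
    have "pcompose (poly_iter G s) (pcompose E (pcompose c l2)) = pcompose E' c'"
      using l2(2) by (simp add: pcompose_assoc)
    also have "\<dots> = pcompose (pcompose (pcompose (poly_iter F s) E) l1) c'" using l1(2) by simp
    also have "\<dots> = pcompose (poly_iter F s) (pcompose E (pcompose l1 c'))" by (simp add: pcompose_assoc)
    finally show ?thesis .
  qed
  obtain e where "degree e = 1" "pcompose (poly_iter G s) e = poly_iter F s"
    using right_factor[OF e3] assms dGs l1 l2 by (auto simp: degree_pcompose)
  thus ?thesis unfolding s_def by metis
qed

end
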